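(* Let $Q_0$ be the unit cube in $\mathbb R^d$ and $f\in C(Q_0)$. There is $N_0=N_0(d)$ such that the following holds. Let $Q\subset Q_0$ be a cube partitioned into $K^d$ equal cubes $q_i$, $K\ge 8$, with $2q_i\subset Q_0$ for all $i$, and put $N_{\min}=\min_i N_f(q_i)$. If $N_{\min}\ge N_0(d)$, then \[N_f(Q/2)\ge \frac K8 N_{\min}.\]
   Context: For a cube $q$ and $t>0$, $tq$ is the concentric cube with side length multiplied by $t$. For a cube $q$ with $2q\subset Q_0$, $N_f(q)=\log\frac{\max_{2q}|f|}{\max_q|f|}$. *)

theory Defs
  imports "HOL-Analysis.Analysis"
begin

text \<open>Closed axis-parallel cube with center c and side length s.
  Then t q (concentric, side multiplied by t) is cube c (t * s).\<close>
definition cube :: "'a::euclidean_space \<Rightarrow> real \<Rightarrow> 'a set" where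
  "cube c s = cbox (c - (s/2) *\<^sub>R One) (c + (s/2) *\<^sub>R One)"

definition unit_cube :: "'a::euclidean_space set" where
  "unit_cube = cbox 0 One"

text \<open>max over S of |f| (a maximum when S is compact and f continuous).\<close>
definition maxabs :: "('a \<Rightarrow> real) \<Rightarrow> 'a set \<Rightarrow> real" where
  "maxabs f S = Sup ((\<lambda>x. \<bar>f x\<bar>) ` S)"

definition doubling_index :: "('a::euclidean_space \<Rightarrow> real) \<Rightarrow> 'a \<Rightarrow> real \<Rightarrow> real" where
  "doubling_index f c s = ln (maxabs f (cube c (2 * s)) / maxabs f (cube c s))"

text \<open>Centers of the K^d equal subcubes (side s/K) partitioning cube c s.\<close>
definition subcube_centers :: "'a::euclidean_space \<Rightarrow> real \<Rightarrow> nat \<Rightarrow> 'a set" where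
  "subcube_centers c s K =
     {c + (\<Sum>b\<in>Basis. ((real (j b) + 1/2) * (s / real K) - s/2) *\<^sub>R b) | j :: 'a \<Rightarrow> nat.
        \<forall>b\<in>Basis. j b < K}"

end

theory Submission imports Defs begin

lemma mem_cube: "y \<in> cube p r \<longleftrightarrow> (\<forall>b\<in>Basis. \<bar>y \<bullet> b - p \<bullet> b\<bar> \<le> r/2)"
proof -
  have "\<And>i. i \<in> Basis \<Longrightarrow> (p - (r / 2) *\<^sub>R One) \<bullet> i = p \<bullet> i - r/2 \<and> (p + (r / 2) *\<^sub>R One) \<bullet> i = p \<bullet> i + r/2"
    by (simp add: inner_diff_left inner_add_left)
  then show ?thesis unfolding cube_def mem_box abs_le_iff by force
qed

lemma maxabs_attain:
  assumes "continuous_on unit_cube f" "cube p r \<subseteq> unit_cube" "r \<ge> 0"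
  shows "\<exists>x\<in>cube p r. \<bar>f x\<bar> = maxabs f (cube p r) \<and> (\<forall>y\<in>cube p r. \<bar>f y\<bar> \<le> maxabs f (cube p r))"
proof -
  have ne: "cube p r \<noteq> {}" using assms(3) unfolding mem_cube ex_in_conv[symmetric]
    by (intro exI[of _ p]) auto
  have co: "compact (cube p r)" unfolding cube_def by simp
  have "continuous_on (cube p r) (\<lambda>x. \<bar>f x\<bar>)"
    by (intro continuous_intros continuous_on_subset[OF assms(1) assms(2)])
  from continuous_attains_sup[OF co ne this] obtain x where x: "x \<in> cube p r" "\<forall>y\<in>cube p r. \<bar>f y\<bar> \<le> \<bar>f x\<bar>"
    by blast
  have "maxabs f (cube p r) = \<bar>f x\<bar>" unfolding maxabs_def
    by (rule cSup_eq_maximum) (use x in auto)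
  then show ?thesis using x by auto
qed

lemma center_in:
  fixes c :: "'a::euclidean_space" and s :: real
  assumes "\<forall>b\<in>Basis. j b < K"
  defines "p \<equiv> c + (\<Sum>b\<in>Basis. ((real (j b) + 1/2) * (s / real K) - s/2) *\<^sub>R b)"
  shows "p \<in> subcube_centers c s K"
    and "\<And>b. b \<in> Basis \<Longrightarrow> p \<bullet> b = c \<bullet> b + ((real (j b) + 1/2) * (s / real K) - s/2)"
  using assms unfolding subcube_centers_def p_def by (auto simp: inner_add_left)

lemma finite_centers: "finite (subcube_centers (c::'a::euclidean_space) s K)"
proof -
  let ?g = "\<lambda>j. c + (\<Sum>b\<in>Basis. ((real (j b) + 1/2) * (s / real K) - s/2) *\<^sub>R b)"
  have "subcube_centers c s K \<subseteq> ?g ` (\<Pi>\<^sub>E b\<in>Basis. {..<K})"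
  proof
    fix p assume "p \<in> subcube_centers c s K"
    then obtain j where j: "\<forall>b\<in>Basis. j b < K" "p = ?g j" unfolding subcube_centers_def by auto
    have "?g j = ?g (restrict j Basis)" by (intro arg_cong2[where f="(+)"] refl sum.cong) auto
    moreover have "restrict j Basis \<in> (\<Pi>\<^sub>E b\<in>Basis. {..<K})" using j by auto
    ultimately show "p \<in> ?g ` (\<Pi>\<^sub>E b\<in>Basis. {..<K})" using j by blast
  qed
  moreover have "finite (?g ` (\<Pi>\<^sub>E b\<in>Basis. {..<K}))" by (intro finite_imageI finite_PiE) auto
  ultimately show ?thesis by (rule finite_subset)
qed

definition crd :: "'a::euclidean_space \<Rightarrow> real \<Rightarrow> nat \<Rightarrow> 'a \<Rightarrow> 'a \<Rightarrow> real" where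
  "crd c s K y b = (y \<bullet> b - c \<bullet> b) / (s / real K) + real K / 2"

lemma step:
  fixes c :: "'a::euclidean_space"
  assumes cont: "continuous_on unit_cube f" and s: "s > 0" and K: "K > 0"
    and sub: "\<forall>p\<in>subcube_centers c s K. cube p (2 * (s / real K)) \<subseteq> unit_cube"
    and pos: "\<forall>p\<in>subcube_centers c s K. maxabs f (cube p (s / real K)) > 0"
    and N: "\<forall>p\<in>subcube_centers c s K. N \<le> doubling_index f p (s / real K)"
    and y: "\<forall>b\<in>Basis. lo \<le> floor (crd c s K y b) \<and> floor (crd c s K y b) \<le> hi"
    and lo: "lo \<ge> 1" and hi: "hi \<le> int K - 2"
  shows "\<exists>y'. exp N * \<bar>f y\<bar> \<le> \<bar>f y'\<bar> \<and>
     (\<forall>b\<in>Basis. real_of_int lo - 1/2 \<le> crd c s K y' b \<and> crd c s K y' b \<le> real_of_int hi + 3/2)"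
proof -
  define h where "h = s / real K"
  have h: "h > 0" using s K by (simp add: h_def)
  define j where "j b = nat (floor (crd c s K y b))" for b
  have jK: "\<forall>b\<in>Basis. j b < K" using y lo hi unfolding j_def by fastforce
  have jf: "real (j b) = real_of_int (floor (crd c s K y b))" if "b \<in> Basis" for b
    using y lo that unfolding j_def by fastforce
  define p where "p = c + (\<Sum>b\<in>Basis. ((real (j b) + 1/2) * (s / real K) - s/2) *\<^sub>R b)"
  have p: "p \<in> subcube_centers c s K" unfolding p_def by (rule center_in(1)[OF jK])
  have pb: "p \<bullet> b = c \<bullet> b + ((real (j b) + 1/2) * h - s/2)" if "b \<in> Basis" for b
    unfolding p_def h_def by (rule center_in(2)[OF jK that])
  have sK: "s / 2 = real K / 2 * h" using K by (simp add: h_def)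
  have crdp: "crd c s K p b = real (j b) + 1/2" if "b \<in> Basis" for b
    using pb[OF that] h unfolding crd_def h_def[symmetric] sK by (simp add: field_simps)
  have crd_diff: "crd c s K z b - crd c s K p b = (z \<bullet> b - p \<bullet> b) / h" for z b
  proof -
    have "crd c s K z b - crd c s K p b = (z \<bullet> b - c \<bullet> b) / h - (p \<bullet> b - c \<bullet> b) / h"
      unfolding crd_def h_def by simp
    also have "\<dots> = (z \<bullet> b - p \<bullet> b) / h" by (simp add: diff_divide_distrib[symmetric])
    finally show ?thesis .
  qed
  have yin: "y \<in> cube p h"
    unfolding mem_cube
  proof
    fix b :: 'a assume b: "b \<in> Basis"
    have "\<bar>crd c s K y b - crd c s K p b\<bar> \<le> 1/2"
      using crdp[OF b] jf[OF b] of_int_floor_le[of "crd c s K y b"]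
        real_of_int_floor_add_one_gt[of "crd c s K y b"] by arith
    then have "\<bar>y \<bullet> b - p \<bullet> b\<bar> / h \<le> 1/2" unfolding crd_diff using h by simp
    then show "\<bar>y \<bullet> b - p \<bullet> b\<bar> \<le> h / 2" using h by (simp add: field_simps)
  qed
  have sub1: "cube p h \<subseteq> cube p (2 * h)" using h by (auto simp: mem_cube) (smt (verit) field_sum_of_halves)
  have sub2: "cube p (2*h) \<subseteq> unit_cube" using sub p h_def by auto
  obtain z where z: "z \<in> cube p h" "\<bar>f z\<bar> = maxabs f (cube p h)"
      "\<forall>w\<in>cube p h. \<bar>f w\<bar> \<le> maxabs f (cube p h)"
    using maxabs_attain[OF cont subset_trans[OF sub1 sub2]] h by auto
  obtain y' where y': "y' \<in> cube p (2*h)" "\<bar>f y'\<bar> = maxabs f (cube p (2*h))"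
      "\<forall>w\<in>cube p (2*h). \<bar>f w\<bar> \<le> maxabs f (cube p (2*h))"
    using maxabs_attain[OF cont sub2] h by auto
  have m1: "maxabs f (cube p h) > 0" using pos p h_def by auto
  have m12: "maxabs f (cube p h) \<le> maxabs f (cube p (2*h))" using z y' sub1 by (metis subsetD)
  have "N \<le> ln (maxabs f (cube p (2*h)) / maxabs f (cube p h))"
    using N p unfolding doubling_index_def h_def by auto
  then have "exp N \<le> maxabs f (cube p (2*h)) / maxabs f (cube p h)"
    using m1 m12 by (subst (asm) ln_ge_iff) auto
  then have e: "exp N * maxabs f (cube p h) \<le> maxabs f (cube p (2*h))"
    using m1 by (simp add: field_simps)
  have "exp N * \<bar>f y\<bar> \<le> exp N * maxabs f (cube p h)"
    by (rule mult_left_mono) (use z(3) yin in auto)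
  with e y'(2) have A: "exp N * \<bar>f y\<bar> \<le> \<bar>f y'\<bar>" by linarith
  have B: "real_of_int lo - 1/2 \<le> crd c s K y' b \<and> crd c s K y' b \<le> real_of_int hi + 3/2"
    if b: "b \<in> Basis" for b
  proof -
    have "\<bar>y' \<bullet> b - p \<bullet> b\<bar> \<le> h" using y'(1) b unfolding mem_cube by auto
    then have "\<bar>crd c s K y' b - crd c s K p b\<bar> \<le> 1" unfolding crd_diff using h by simp
    moreover have "real_of_int lo \<le> real (j b)" "real (j b) \<le> real_of_int hi"
      using jf[OF b] y b by auto
    ultimately show ?thesis using crdp[OF b] by linarith
  qed
  show ?thesis using A B by blast
qed

lemma crd_diff: "crd c s K z b - crd c s K p b = (z \<bullet> b - p \<bullet> b) / (s / real K)"
proof -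
  have "crd c s K z b - crd c s K p b = (z \<bullet> b - c \<bullet> b) / (s / real K) - (p \<bullet> b - c \<bullet> b) / (s / real K)"
    unfolding crd_def by simp
  also have "\<dots> = (z \<bullet> b - p \<bullet> b) / (s / real K)" by (simp only: diff_divide_distrib[symmetric]) simp
  finally show ?thesis .
qed

lemma crd_c: "crd c s K c b = real K / 2" unfolding crd_def by simp

lemma mem_cube_crd:
  assumes "s > 0" "K > 0"
  shows "z \<in> cube p r \<longleftrightarrow> (\<forall>b\<in>Basis. \<bar>crd c s K z b - crd c s K p b\<bar> \<le> r * real K / (2 * s))"
proof -
  have "\<bar>x / (s / real K)\<bar> \<le> r * real K / (2 * s) \<longleftrightarrow> \<bar>x\<bar> \<le> r / 2" for x
    using assms by (simp add: abs_divide field_simps abs_mult)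
  then show ?thesis unfolding mem_cube crd_diff by simp
qed

lemma crd_center:
  fixes c :: "'a::euclidean_space"
  assumes "\<forall>b\<in>Basis. j b < K" "s > 0" "K > 0" "b \<in> Basis"
  shows "crd c s K (c + (\<Sum>b\<in>Basis. ((real (j b) + 1/2) * (s / real K) - s/2) *\<^sub>R b)) b = real (j b) + 1/2"
proof -
  define h where "h = s / real K"
  have h: "h > 0" using assms by (simp add: h_def)
  have sK: "s / 2 = real K / 2 * h" using assms by (simp add: h_def)
  show ?thesis
    using center_in(2)[OF assms(1) assms(4), of c s] h unfolding crd_def h_def[symmetric] sK
    by (simp add: field_simps)
qed

lemma iter:
  fixes c :: "'a::euclidean_space"
  assumes cont: "continuous_on unit_cube f" and s: "s > 0" and K: "K > 0"
    and sub: "\<forall>p\<in>subcube_centers c s K. cube p (2 * (s / real K)) \<subseteq> unit_cube"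
    and pos: "\<forall>p\<in>subcube_centers c s K. maxabs f (cube p (s / real K)) > 0"
    and N: "\<forall>p\<in>subcube_centers c s K. N \<le> doubling_index f p (s / real K)"
  shows "\<forall>y. (\<forall>b\<in>Basis. real m + 1/2 \<le> crd c s K y b \<and> crd c s K y b \<le> real K - real m - 1/2)
     \<longrightarrow> (\<exists>y'. exp (real m * N) * \<bar>f y\<bar> \<le> \<bar>f y'\<bar> \<and>
            (\<forall>b\<in>Basis. 1/2 \<le> crd c s K y' b \<and> crd c s K y' b \<le> real K - 1/2))"
proof (induction m)
  case 0
  then show ?case by auto
next
  case (Suc m)
  show ?case
  proof (intro allI impI)
    fix y assume y: "\<forall>b\<in>Basis. real (Suc m) + 1/2 \<le> crd c s K y b \<and> crd c s K y b \<le> real K - real (Suc m) - 1/2"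
    have fl: "\<forall>b\<in>Basis. int m + 1 \<le> floor (crd c s K y b) \<and> floor (crd c s K y b) \<le> int K - int m - 2"
      using y unfolding le_floor_iff floor_le_iff by auto
    have "int m + 1 \<le> int K - int m - 2"
      using fl order_trans by (metis (no_types, lifting) SOME_Basis)
    then obtain y1 where y1: "exp N * \<bar>f y\<bar> \<le> \<bar>f y1\<bar>"
      "\<forall>b\<in>Basis. real_of_int (int m + 1) - 1/2 \<le> crd c s K y1 b \<and> crd c s K y1 b \<le> real_of_int (int K - int m - 2) + 3/2"
      using step[OF cont s K sub pos N fl] by force
    have "\<forall>b\<in>Basis. real m + 1/2 \<le> crd c s K y1 b \<and> crd c s K y1 b \<le> real K - real m - 1/2"
      using y1(2) by auto
    with Suc.IH obtain y' where y': "exp (real m * N) * \<bar>f y1\<bar> \<le> \<bar>f y'\<bar>"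
      "\<forall>b\<in>Basis. 1/2 \<le> crd c s K y' b \<and> crd c s K y' b \<le> real K - 1/2" by blast
    have "exp (real (Suc m) * N) * \<bar>f y\<bar> = exp (real m * N) * (exp N * \<bar>f y\<bar>)"
      by (simp add: distrib_right exp_add)
    also have "\<dots> \<le> exp (real m * N) * \<bar>f y1\<bar>" using y1(1) by simp
    also have "\<dots> \<le> \<bar>f y'\<bar>" by (rule y'(1))
    finally show "\<exists>y'. exp (real (Suc m) * N) * \<bar>f y\<bar> \<le> \<bar>f y'\<bar> \<and>
            (\<forall>b\<in>Basis. 1/2 \<le> crd c s K y' b \<and> crd c s K y' b \<le> real K - 1/2)"
      using y'(2) by blast
  qed
qed

lemma abs_ball: "(\<forall>b\<in>B. \<bar>g b - a\<bar> \<le> (r::real)) \<longleftrightarrow> (\<forall>b\<in>B. a - r \<le> g b \<and> g b \<le> a + r)"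
  unfolding abs_le_iff by (rule ball_cong) auto

theorem lemma4p1:
  shows "\<exists>N0::real. \<forall>(f :: 'a::euclidean_space \<Rightarrow> real) (c :: 'a) (s :: real) (K :: nat).
     continuous_on unit_cube f \<and> s > 0 \<and> cube c s \<subseteq> unit_cube \<and> K \<ge> 8 \<and>
     (\<forall>p\<in>subcube_centers c s K. cube p (2 * (s / real K)) \<subseteq> unit_cube) \<and>
     (\<forall>p\<in>subcube_centers c s K. maxabs f (cube p (s / real K)) > 0) \<and>
     Min ((\<lambda>p. doubling_index f p (s / real K)) ` subcube_centers c s K) \<ge> N0
     \<longrightarrow> doubling_index f c (s / 2) \<ge>
           real K / 8 * Min ((\<lambda>p. doubling_index f p (s / real K)) ` subcube_centers c s K)"
proof (intro exI[of _ 0] allI impI)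
  fix f :: "'a::euclidean_space \<Rightarrow> real" and c :: 'a and s :: real and K :: nat
  assume A: "continuous_on unit_cube f \<and> s > 0 \<and> cube c s \<subseteq> unit_cube \<and> K \<ge> 8 \<and>
     (\<forall>p\<in>subcube_centers c s K. cube p (2 * (s / real K)) \<subseteq> unit_cube) \<and>
     (\<forall>p\<in>subcube_centers c s K. maxabs f (cube p (s / real K)) > 0) \<and>
     Min ((\<lambda>p. doubling_index f p (s / real K)) ` subcube_centers c s K) \<ge> 0"
  define N where "N = Min ((\<lambda>p. doubling_index f p (s / real K)) ` subcube_centers c s K)"
  define h where "h = s / real K"
  have cont: "continuous_on unit_cube f" and s: "s > 0" and Q: "cube c s \<subseteq> unit_cube"
    and K8: "K \<ge> 8" and sub: "\<forall>p\<in>subcube_centers c s K. cube p (2 * (s / real K)) \<subseteq> unit_cube"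
    and pos: "\<forall>p\<in>subcube_centers c s K. maxabs f (cube p (s / real K)) > 0"
    and N0: "N \<ge> 0" using A by (auto simp: N_def)
  have K: "K > 0" using K8 by simp
  have h: "h > 0" using s K by (simp add: h_def)
  have Nle: "\<forall>p\<in>subcube_centers c s K. N \<le> doubling_index f p (s / real K)"
    unfolding N_def by (intro ballI Min_le) (auto simp: finite_centers)
  note mc = mem_cube_crd[OF s K, of _ _ _ c]
  define pm where "pm = c + (\<Sum>b\<in>Basis. ((real ((\<lambda>_. K div 2) b) + 1/2) * (s / real K) - s/2) *\<^sub>R b)"
  have jm: "\<forall>b\<in>(Basis::'a set). (\<lambda>_. K div 2) b < K" using K by auto
  have pm: "pm \<in> subcube_centers c s K" unfolding pm_def by (rule center_in(1)[OF jm])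
  have crdpm: "crd c s K pm b = real (K div 2) + 1/2" if "b \<in> Basis" for b
    unfolding pm_def using crd_center[OF jm s K that, of c] by simp
  have Kd: "real K / 2 - 1/2 \<le> real (K div 2)" "real (K div 2) \<le> real K / 2" by linarith+
  have sKK: "s * real K / (2 * s) = real K / 2" "s / 2 * real K / (2 * s) = real K / 4"
    "s / real K * real K / (2 * s) = 1/2" using s K by (auto simp: field_simps)
  have pmsub: "cube pm h \<subseteq> cube c (s/2)"
  proof
    fix z assume "z \<in> cube pm h"
    then have "\<forall>b\<in>Basis. \<bar>crd c s K z b - crd c s K pm b\<bar> \<le> 1/2"
      unfolding mc h_def sKK by simp
    moreover have "real K \<ge> 8" using K8 by simp
    ultimately show "z \<in> cube c (s/2)" unfolding mc sKK crd_c
    proof (intro ballI)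
      fix b :: 'a assume b: "b \<in> Basis" and
        H: "\<forall>b\<in>Basis. \<bar>crd c s K z b - crd c s K pm b\<bar> \<le> 1/2" and K8': "real K \<ge> 8"
      have "\<bar>crd c s K z b - crd c s K pm b\<bar> \<le> 1/2" using H b by blast
      then show "\<bar>crd c s K z b - real K / 2\<bar> \<le> real K / 4"
        using crdpm[OF b] Kd K8' unfolding abs_le_iff by linarith
    qed
  qed
  have halfsub: "cube c (s/2) \<subseteq> cube c s" using s by (auto simp: mem_cube) (smt (verit))
  obtain z where z: "z \<in> cube pm h" "\<bar>f z\<bar> = maxabs f (cube pm h)"
    using maxabs_attain[OF cont, of pm h] pmsub halfsub Q h by fastforce
  define M where "M = maxabs f (cube c (s/2))"
  obtain x where x: "x \<in> cube c (s/2)" "\<bar>f x\<bar> = M" "\<forall>w\<in>cube c (s/2). \<bar>f w\<bar> \<le> M"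
    using maxabs_attain[OF cont, of c "s/2"] halfsub Q s unfolding M_def by fastforce
  have Mpos: "M > 0" using x(3) z pmsub pos pm unfolding h_def by (metis less_le_trans subsetD)
  define cK where "cK = ceiling (real K / 4)"
  have cK: "real_of_int cK - 1 < real K / 4" "real K / 4 \<le> real_of_int cK"
    unfolding cK_def using ceiling_correct[of "real K / 4"] by auto
  have xc: "\<forall>b\<in>Basis. real K / 4 \<le> crd c s K x b \<and> crd c s K x b \<le> 3 * real K / 4"
    using x(1) unfolding mc sKK crd_c abs_ball by auto
  have fl: "\<forall>b\<in>Basis. cK - 1 \<le> floor (crd c s K x b) \<and> floor (crd c s K x b) \<le> int K - cK"
    using xc cK unfolding le_floor_iff floor_le_iff by force
  have lo: "cK - 1 \<ge> 1" using cK K8 by linarith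
  have hi: "int K - cK \<le> int K - 2" using cK K8 by linarith
  obtain y1 where y1: "exp N * \<bar>f x\<bar> \<le> \<bar>f y1\<bar>"
    "\<forall>b\<in>Basis. real_of_int (cK - 1) - 1/2 \<le> crd c s K y1 b \<and> crd c s K y1 b \<le> real_of_int (int K - cK) + 3/2"
    using step[OF cont s K sub pos Nle fl lo hi] by blast
  define m where "m = nat (cK - 2)"
  have m: "real m = real_of_int cK - 2" using lo unfolding m_def by simp
  have "\<forall>b\<in>Basis. real m + 1/2 \<le> crd c s K y1 b \<and> crd c s K y1 b \<le> real K - real m - 1/2"
    using y1(2) m by auto
  with iter[OF cont s K sub pos Nle, of m] obtain y' where
    y': "exp (real m * N) * \<bar>f y1\<bar> \<le> \<bar>f y'\<bar>"
      "\<forall>b\<in>Basis. 1/2 \<le> crd c s K y' b \<and> crd c s K y' b \<le> real K - 1/2" by blast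
  have y'Q: "y' \<in> cube c s" unfolding mc sKK crd_c abs_ball using y'(2) by auto
  obtain w where w: "\<forall>v\<in>cube c s. \<bar>f v\<bar> \<le> maxabs f (cube c s)"
    using maxabs_attain[OF cont Q] s by fastforce
  have "exp ((real m + 1) * N) * M = exp (real m * N) * (exp N * \<bar>f x\<bar>)"
    using x(2) by (simp add: distrib_right exp_add)
  also have "\<dots> \<le> exp (real m * N) * \<bar>f y1\<bar>" using y1(1) by simp
  also have "\<dots> \<le> \<bar>f y'\<bar>" by (rule y'(1))
  also have "\<dots> \<le> maxabs f (cube c s)" using w y'Q by blast
  finally have E: "exp ((real m + 1) * N) \<le> maxabs f (cube c s) / M"
    using Mpos by (simp add: field_simps)
  have "(real m + 1) * N \<le> ln (maxabs f (cube c s) / M)"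
    using E Mpos by (subst ln_ge_iff) (auto intro: less_le_trans[OF exp_gt_zero])
  moreover have "real K / 8 * N \<le> (real m + 1) * N"
    using N0 m cK K8 by (intro mult_right_mono) auto
  ultimately have "real K / 8 * N \<le> doubling_index f c (s / 2)"
    unfolding doubling_index_def M_def by simp
  then show "real K / 8 * Min ((\<lambda>p. doubling_index f p (s / real K)) ` subcube_centers c s K)
      \<le> doubling_index f c (s / 2)" unfolding N_def .
qed

end
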